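(* Let $\epsilon\in(0,1)$, $u_0\in\mathbb{R}$, $h>0$, and let $(u_n)_{n\ge0}$ be a sequence of real numbers starting at $u_0$ and satisfying the convex-splitting modified Crank–Nicolson scheme $$\frac{u_n-u_{n-1}}{h}+\frac{1}{\epsilon^2}\left(\frac{u_n+u_{n-1}}{2}\right)\left(\frac{u_n^2+u_{n-1}^2}{2}\right)-\frac{1}{\epsilon^2}u_{n-1}=0,\qquad n\ge1.$$ (i) If $u_0\in\{0,1,-1\}$, then $u_n=\mathrm{sign}(u_0)$ for all $n\ge1$, for any $h>0$ and any $\epsilon$. (ii) If $u_0\notin\{0,1,-1\}$, define $h^*=h^*(u_0,\epsilon)=\frac{4\epsilon^2}{u_0^2+2|u_0|-1}$ if $|u_0|>1$ and $h^*=2\epsilon^2$ if $0<|u_0|<1$. Then $h^*>0$ and for every $h\in(0,h^*]$ the sequence $(u_n)$ is monotone and converges to $\mathrm{sign}(u_0)$ as $n\to\infty$.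
   Context: The scheme discretizes the ODE $u'(t)+\frac{1}{\epsilon^2}(u^3-u)=0$, $u(0)=u_0$. For every $h>0$ each step equation has a unique real solution $u_n$. Here $\mathrm{sign}(0)=0$. *)

theory Defs
  imports "HOL-Analysis.Analysis"
begin

text \<open>Convex-splitting modified Crank--Nicolson step residual for
  u' + (u^3 - u)/eps^2 = 0: the step from v = u_{n-1} to w = u_n.\<close>
definition cs_mcn_step :: "real \<Rightarrow> real \<Rightarrow> real \<Rightarrow> real \<Rightarrow> bool" where
  "cs_mcn_step eps h v w \<longleftrightarrow>
     (w - v) / h + (1 / eps^2) * ((w + v) / 2) * ((w^2 + v^2) / 2) - (1 / eps^2) * v = 0"

definition h_star :: "real \<Rightarrow> real \<Rightarrow> real" where
  "h_star u0 eps = (if \<bar>u0\<bar> > 1 then 4 * eps^2 / (u0^2 + 2 * \<bar>u0\<bar> - 1) else 2 * eps^2)"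

end

theory Submission
  imports Defs
begin

definition G :: "real \<Rightarrow> real \<Rightarrow> real \<Rightarrow> real" where
  "G k v w = (w - v) + k * ((w + v) * (w^2 + v^2) / 4 - v)"

lemma step_iff:
  assumes "0 < eps" "0 < h"
  shows "cs_mcn_step eps h v w \<longleftrightarrow> G (h / eps^2) v w = 0"
proof -
  have "cs_mcn_step eps h v w \<longleftrightarrow> h * ((w - v) / h + (1 / eps^2) * ((w + v) / 2) * ((w^2 + v^2) / 2) - (1 / eps^2) * v) = 0"
    unfolding cs_mcn_step_def using assms by simp
  also have "h * ((w - v) / h + (1 / eps^2) * ((w + v) / 2) * ((w^2 + v^2) / 2) - (1 / eps^2) * v) = G (h / eps^2) v w"
    unfolding G_def using assms by (simp add: field_simps)
  finally show ?thesis .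
qed

lemma G4: "4 * G k v w = 4 * (w - v) + k * ((w + v) * (w^2 + v^2) - 4 * v)"
  unfolding G_def by (simp add: field_simps)

lemma G_mono:
  assumes "0 \<le> k" "a < b"
  shows "G k v a < G k v b"
proof -
  have Q: "0 \<le> a^2 + a * b + b^2 + v * (a + b) + v^2"
  proof -
    have "a^2 + a * b + b^2 + v * (a + b) + v^2 = ((a + b)^2 + (a + v)^2 + (b + v)^2) / 2"
      by (simp add: power2_eq_square algebra_simps)
    also have "\<dots> \<ge> 0" by simp
    finally show ?thesis by simp
  qed
  have "4 * (G k v b - G k v a) = (b - a) * (4 + k * (a^2 + a * b + b^2 + v * (a + b) + v^2))"
    unfolding right_diff_distrib G4 by (simp add: power2_eq_square algebra_simps)
  moreover have "(b - a) * (4 + k * (a^2 + a * b + b^2 + v * (a + b) + v^2)) > 0"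
    using assms Q by (intro mult_pos_pos) (auto intro!: add_pos_nonneg)
  ultimately have "4 * (G k v b - G k v a) > 0" by simp
  thus ?thesis by simp
qed

lemma G_le:
  assumes "0 \<le> k" "G k v w = 0" "G k v a \<le> 0" shows "a \<le> w"
  using G_mono[OF assms(1), of w a v] assms by force

lemma G_lt:
  assumes "0 \<le> k" "G k v w = 0" "G k v a < 0" shows "a < w"
proof (rule ccontr)
  assume "\<not> a < w"
  hence "w < a \<or> w = a" by auto
  thus False using G_mono[OF assms(1), of w a v] assms by auto
qed

lemma G_ge:
  assumes "0 \<le> k" "G k v w = 0" "G k v a \<ge> 0" shows "w \<le> a"
  using G_mono[OF assms(1), of a w v] assms by force

lemma G_gt:
  assumes "0 \<le> k" "G k v w = 0" "G k v a > 0" shows "w < a"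
proof (rule ccontr)
  assume "\<not> w < a"
  hence "a < w \<or> w = a" by auto
  thus False using G_mono[OF assms(1), of a w v] assms by auto
qed

lemma G_uniq:
  assumes "0 \<le> k" "G k v w = 0" "G k v a = 0" shows "w = a"
  using G_le[OF assms(1,2), of a] G_ge[OF assms(1,2), of a] assms(3) by simp

lemma G_1: "4 * G k v 1 = (1 - v) * (4 + k * (1 - 2 * v - v^2))"
  unfolding G4 by (simp add: power2_eq_square algebra_simps)

lemma G_diag: "G k v v = k * (v^3 - v)"
proof -
  have "4 * G k v v = 4 * (k * (v^3 - v))"
    unfolding G4 by (simp add: power2_eq_square power3_eq_cube algebra_simps)
  thus ?thesis by simp
qed

lemma G_neg: "G k (-v) (-w) = - G k v w"
proof -
  have "4 * G k (-v) (-w) = - (4 * G k v w)"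
    unfolding G4 by (simp add: power2_eq_square algebra_simps)
  thus ?thesis by simp
qed

lemma stepA:
  assumes "0 < k" "k \<le> 2" "0 < v" "v < 1" "G k v w = 0"
  shows "v < w \<and> w < 1"
proof
  have vv: "v * v < 1" using mult_strict_mono[of v 1 v 1] assms by simp
  hence "v * (v * v) < v * 1" using assms(3) by (rule mult_strict_left_mono)
  hence "v^3 < v" by (simp add: power3_eq_cube)
  hence "G k v v < 0" using assms by (simp add: G_diag mult_pos_neg)
  thus "v < w" using G_lt[of k v w v] assms by simp
  have "1 - 2 * v - v^2 > -2" using assms vv by (simp add: power2_eq_square)
  hence "k * (1 - 2 * v - v^2) > k * (-2)" using assms by (intro mult_strict_left_mono) auto
  hence "4 + k * (1 - 2 * v - v^2) > 0" using assms by simp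
  hence "(1 - v) * (4 + k * (1 - 2 * v - v^2)) > 0" using assms by simp
  hence "G k v 1 > 0" unfolding G_1[symmetric] by simp
  thus "w < 1" using G_gt[of k v w 1] assms by simp
qed

lemma stepB:
  assumes "0 < k" "k * (v^2 + 2 * v - 1) \<le> 4" "1 \<le> v" "G k v w = 0"
  shows "1 \<le> w \<and> w \<le> v"
proof
  have vv: "1 \<le> v * v" using mult_mono[of 1 v 1 v] assms by simp
  hence "v * 1 \<le> v * (v * v)" using assms(3) by (intro mult_left_mono) auto
  hence "v^3 \<ge> v" by (simp add: power3_eq_cube)
  hence "G k v v \<ge> 0" using assms by (simp add: G_diag)
  thus "w \<le> v" using G_ge[of k v w v] assms by simp
  have "k * (1 - 2 * v - v^2) \<ge> -4" using assms(2) by (simp add: algebra_simps)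
  hence "4 + k * (1 - 2 * v - v^2) \<ge> 0" by simp
  hence "(1 - v) * (4 + k * (1 - 2 * v - v^2)) \<le> 0" using assms by (simp add: mult_nonpos_nonneg)
  hence "G k v 1 \<le> 0" unfolding G_1[symmetric] by simp
  thus "1 \<le> w" using G_le[of k v w 1] assms by simp
qed

lemma limit_fix:
  fixes u :: "nat \<Rightarrow> real"
  assumes "u \<longlonglongrightarrow> L" "\<And>n. G k (u n) (u (Suc n)) = 0" "0 < k" "0 < L"
  shows "L = 1"
proof -
  have "(\<lambda>n. G k (u n) (u (Suc n))) \<longlonglongrightarrow> G k L L"
    unfolding G_def using assms(1) LIMSEQ_Suc[OF assms(1)]
    by (intro tendsto_intros) auto
  moreover have "(\<lambda>n. G k (u n) (u (Suc n))) = (\<lambda>n. 0)" using assms(2) by simp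
  ultimately have "G k L L = 0" using LIMSEQ_unique tendsto_const by metis
  hence "L^3 - L = 0" using assms(3) by (simp add: G_diag)
  hence "L * (L - 1) * (L + 1) = 0" by (simp add: power3_eq_cube algebra_simps)
  thus ?thesis using assms(4) by auto
qed

lemma pos_case:
  fixes u :: "nat \<Rightarrow> real"
  assumes k: "0 < k" and pos: "0 < u 0" and ne: "u 0 \<noteq> 1"
    and step: "\<And>n. G k (u n) (u (Suc n)) = 0"
    and kb1: "u 0 > 1 \<Longrightarrow> k * ((u 0)^2 + 2 * u 0 - 1) \<le> 4"
    and kb2: "u 0 < 1 \<Longrightarrow> k \<le> 2"
  shows "(mono u \<or> antimono u) \<and> u \<longlonglongrightarrow> 1"
proof (cases "u 0 > 1")
  case True
  have inv: "1 \<le> u n \<and> u n \<le> u 0" for n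
  proof (induction n)
    case 0 thus ?case using True by simp
  next
    case (Suc n)
    have "(u n)^2 \<le> (u 0)^2" using Suc by (intro power_mono) auto
    hence "(u n)^2 + 2 * u n - 1 \<le> (u 0)^2 + 2 * u 0 - 1" using Suc by linarith
    hence "k * ((u n)^2 + 2 * u n - 1) \<le> k * ((u 0)^2 + 2 * u 0 - 1)"
      using k by (simp add: mult_left_mono)
    hence "k * ((u n)^2 + 2 * u n - 1) \<le> 4" using kb1[OF True] by linarith
    from stepB[OF k this _ step] Suc show ?case by auto
  qed
  have dec: "u (Suc n) \<le> u n" for n
  proof -
    have "(u n)^2 \<le> (u 0)^2" using inv[of n] by (intro power_mono) auto
    hence "(u n)^2 + 2 * u n - 1 \<le> (u 0)^2 + 2 * u 0 - 1" using inv[of n] by linarith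
    hence "k * ((u n)^2 + 2 * u n - 1) \<le> k * ((u 0)^2 + 2 * u 0 - 1)"
      using k by (simp add: mult_left_mono)
    hence "k * ((u n)^2 + 2 * u n - 1) \<le> 4" using kb1[OF True] by linarith
    from stepB[OF k this _ step] inv[of n] show ?thesis by auto
  qed
  have "antimono u" by (rule decseq_SucI) (rule dec)
  moreover obtain L where L: "u \<longlonglongrightarrow> L" "\<forall>i. L \<le> u i"
    using decseq_convergent[OF \<open>antimono u\<close>, of 1] inv by blast
  moreover have "1 \<le> L" using L(1) inv by (intro LIMSEQ_le_const) auto
  hence "L = 1" using limit_fix[OF L(1) step k] by simp
  ultimately show ?thesis by auto
next
  case False
  hence lt: "u 0 < 1" using ne by simp
  have inv: "u 0 \<le> u n \<and> u n < 1" for n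
  proof (induction n)
    case 0 thus ?case using lt by simp
  next
    case (Suc n)
    have "0 < u n" using Suc pos by linarith
    from stepA[OF k kb2[OF lt] this _ step] Suc show ?case by auto
  qed
  have inc: "u n \<le> u (Suc n)" for n
    using stepA[OF k kb2[OF lt] _ _ step, of n] inv[of n] pos by auto
  have "mono u" by (rule incseq_SucI) (rule inc)
  moreover obtain L where L: "u \<longlonglongrightarrow> L" "\<forall>i. u i \<le> L"
    using incseq_convergent[OF \<open>mono u\<close>, of 1] inv less_imp_le by blast
  moreover have "u 0 \<le> L" using L(2) by auto
  hence "L = 1" using limit_fix[OF L(1) step k] pos by simp
  ultimately show ?thesis by auto
qed

lemma kbounds:
  assumes eps: "0 < eps" and h: "0 < h" and a: "0 < a" "a \<noteq> 1" and hh: "h \<le> h_star a eps"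
  shows "(a > 1 \<longrightarrow> (h / eps^2) * (a^2 + 2 * a - 1) \<le> 4) \<and> (a < 1 \<longrightarrow> h / eps^2 \<le> 2)"
proof (intro conjI impI)
  assume "a > 1"
  hence D: "a^2 + 2 * a - 1 > 0" by (smt (verit) one_less_power zero_less_numeral)
  have "h \<le> 4 * eps^2 / (a^2 + 2 * a - 1)" using hh \<open>a > 1\<close> by (simp add: h_star_def)
  hence "h * (a^2 + 2 * a - 1) \<le> 4 * eps^2" using D by (simp add: le_divide_eq)
  thus "(h / eps^2) * (a^2 + 2 * a - 1) \<le> 4" using eps by (simp add: field_simps)
next
  assume "a < 1"
  hence "h \<le> 2 * eps^2" using hh a by (simp add: h_star_def)
  thus "h / eps^2 \<le> 2" using eps by (simp add: field_simps)
qed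

theorem theorem3p10:
  fixes eps u0 h :: real and u :: "nat \<Rightarrow> real"
  assumes eps: "0 < eps" "eps < 1"
    and h: "0 < h"
    and init: "u 0 = u0"
    and scheme: "\<And>n. n \<ge> 1 \<Longrightarrow> cs_mcn_step eps h (u (n - 1)) (u n)"
  shows "(u0 \<in> {0, 1, -1} \<longrightarrow> (\<forall>n\<ge>1. u n = sgn u0))
       \<and> (u0 \<notin> {0, 1, -1} \<longrightarrow>
            h_star u0 eps > 0 \<and>
            (h \<le> h_star u0 eps \<longrightarrow> (mono u \<or> antimono u) \<and> u \<longlonglongrightarrow> sgn u0))"
proof (intro conjI impI)
  define k where "k = h / eps^2"
  have k: "0 < k" unfolding k_def using eps h by simp
  have step: "G k (u n) (u (Suc n)) = 0" for n
    using scheme[of "Suc n"] step_iff[OF eps(1) h] unfolding k_def by simp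
  {
    assume u0: "u0 \<in> {0, 1, -1}"
    have fix0: "G k u0 u0 = 0" using u0 by (auto simp: G_diag)
    have "u n = u0" for n
    proof (induction n)
      case 0 thus ?case using init by simp
    next
      case (Suc n) thus ?case using G_uniq[OF less_imp_le[OF k] step[of n] fix0[folded Suc]] by simp
    qed
    moreover have "sgn u0 = u0" using u0 by auto
    ultimately show "\<forall>n\<ge>1. u n = sgn u0" by simp
  }
  assume u0: "u0 \<notin> {0, 1, -1}"
  show hs: "h_star u0 eps > 0"
  proof (cases "\<bar>u0\<bar> > 1")
    case True
    have "u0^2 \<ge> 0" by simp
    hence "u0^2 + 2 * \<bar>u0\<bar> - 1 > 0" using True by linarith
    thus ?thesis using True eps by (simp add: h_star_def)
  next
    case False thus ?thesis using eps by (simp add: h_star_def)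
  qed
  assume hh: "h \<le> h_star u0 eps"
  have fin: "(mono u \<or> antimono u) \<and> u \<longlonglongrightarrow> sgn u0"
  proof (cases "u0 > 0")
    case True
    have hh': "h \<le> h_star (u 0) eps" using hh init by simp
    have p0: "0 < u 0" "u 0 \<noteq> 1" using True u0 init by auto
    note kb = kbounds[OF eps(1) h p0 hh', folded k_def]
    have "(mono u \<or> antimono u) \<and> u \<longlonglongrightarrow> 1"
      using pos_case[OF k p0 step] kb by blast
    thus ?thesis using True by simp
  next
    case False
    hence neg: "u0 < 0" using u0 by auto
    define w where "w = (\<lambda>n. - u n)"
    have wstep: "G k (w n) (w (Suc n)) = 0" for n unfolding w_def using step[of n] G_neg by simp
    have "h_star (w 0) eps = h_star u0 eps" unfolding w_def h_star_def using init by simp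
    hence hh': "h \<le> h_star (w 0) eps" using hh by simp
    have w0: "w 0 > 0" "w 0 \<noteq> 1" using init neg u0 unfolding w_def by auto
    note kb = kbounds[OF eps(1) h w0 hh'] 
    have res: "(mono w \<or> antimono w) \<and> w \<longlonglongrightarrow> 1"
      using pos_case[OF k w0 wstep] kb[folded k_def] by blast
    have uw: "u = (\<lambda>n. - w n)" unfolding w_def by simp
    have "mono u \<or> antimono u"
    proof (cases "mono w")
      case True
      hence "antimono u" unfolding uw mono_def antimono_def by simp
      thus ?thesis by simp
    next
      case False
      hence "antimono w" using res by simp
      hence "mono u" unfolding uw mono_def antimono_def by simp
      thus ?thesis by simp
    qed
    moreover have "u \<longlonglongrightarrow> -1" using tendsto_minus[of w 1 sequentially] res unfolding uw by simp
    ultimately show ?thesis using neg by simp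
  qed
  show "mono u \<or> antimono u" using fin by simp
  show "u \<longlonglongrightarrow> sgn u0" using fin by simp
qed

end
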